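(* Let $r\ge1$, $\mu\in\mathcal P_r$, $n\in\mathbb N$ and $\mathbf p\in\Pi_n$. If $r=1$ or ${\rm supp}\,\mu$ is connected, then there exists $\mathbf x\in\Xi_n$ minimizing $\mathbf y\mapsto d_r(\delta^{\mathbf p}_{\mathbf y},\mu)$ over $\Xi_n$ such that ${\rm supp}\,\delta^{\mathbf p}_{\mathbf x}\subset{\rm supp}\,\mu$.
   Context: $\mathcal P$ denotes the set of Borel probability measures on $\mathbb R$; $\mathcal P_r=\{\mu\in\mathcal P:\int|x|^r{\rm d}\mu(x)<\infty\}$. For $\mu\in\mathcal P$, $F_\mu(x)=\mu(]-\infty,x])$ and $F_\mu^{-1}(t)=\sup\{x: F_\mu(x)\le t\}$, $t\in]0,1[$; ${\rm supp}$ denotes support. $d_r(\mu,\nu)=\big(\int_0^1|F_\mu^{-1}(t)-F_\nu^{-1}(t)|^r{\rm d}t\big)^{1/r}$. $\Xi_n=\{\mathbf x\in\mathbb R^n:x_1\le\dots\le x_n\}$, $\Pi_n=\{\mathbf p\in\mathbb R^n:p_i\ge0,\sum_ip_i=1\}$, $\delta^{\mathbf p}_{\mathbf x}=\sum_ip_i\delta_{x_i}$. *)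

theory Defs
  imports "HOL-Probability.Probability"
begin

definition prob_real :: "real measure \<Rightarrow> bool" where
  "prob_real M \<longleftrightarrow> prob_space M \<and> sets M = sets borel"

definition prob_real_r :: "real \<Rightarrow> real measure \<Rightarrow> bool" where
  "prob_real_r r M \<longleftrightarrow> prob_real M \<and> integrable M (\<lambda>x. \<bar>x\<bar> powr r)"

definition cdf_of :: "real measure \<Rightarrow> real \<Rightarrow> real" where
  "cdf_of M x = measure M {..x}"

definition quantile :: "real measure \<Rightarrow> real \<Rightarrow> real" where
  "quantile M t = Sup {x. cdf_of M x \<le> t}"

definition d_r :: "real \<Rightarrow> real measure \<Rightarrow> real measure \<Rightarrow> real" where
  "d_r r M N = (LBINT t:{0<..<1}. \<bar>quantile M t - quantile N t\<bar> powr r) powr (1 / r)"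

definition supp :: "real measure \<Rightarrow> real set" where
  "supp M = {x. \<forall>e>0. emeasure M {x - e<..<x + e} > 0}"

definition Xi :: "nat \<Rightarrow> real list set" where
  "Xi n = {xs. length xs = n \<and> sorted xs}"

definition Pi_simplex :: "nat \<Rightarrow> real list set" where
  "Pi_simplex n = {ps. length ps = n \<and> (\<forall>i<n. ps ! i \<ge> 0) \<and> sum_list ps = 1}"

definition discr :: "real list \<Rightarrow> real list \<Rightarrow> real measure" where
  "discr ps xs = measure_of UNIV (sets borel)
     (\<lambda>A. \<Sum>i<length xs. ennreal (ps ! i) * indicator A (xs ! i))"

end

theory Submission
  imports Defs
begin


lemma emeasure_discr:
  assumes A: "A \<in> sets borel"
  shows "emeasure (discr ps xs) A = (\<Sum>i<length xs. ennreal (ps ! i) * indicator A (xs ! i))"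
  unfolding discr_def
proof (rule emeasure_measure_of_sigma)
  show "sigma_algebra UNIV (sets borel)"
    by (metis sets.sigma_algebra_axioms space_borel)
  show "positive (sets borel) (\<lambda>A. \<Sum>i<length xs. ennreal (ps ! i) * indicator A (xs ! i))"
    by (simp add: positive_def)
  show "countably_additive (sets borel) (\<lambda>A. \<Sum>i<length xs. ennreal (ps ! i) * indicator A (xs ! i))"
    unfolding countably_additive_def
  proof (intro allI impI)
    fix F :: "nat \<Rightarrow> real set"
    assume "range F \<subseteq> sets borel" "disjoint_family F"
    then show "(\<Sum>n. \<Sum>i<length xs. ennreal (ps ! i) * indicator (F n) (xs ! i)) =
       (\<Sum>i<length xs. ennreal (ps ! i) * indicator (\<Union> (range F)) (xs ! i))"
      by (subst suminf_sum) (auto simp: suminf_indicator)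
  qed
qed (fact A)

lemma sets_discr[simp]: "sets (discr ps xs) = sets borel"
  unfolding discr_def by (metis sets.sets_measure_of_eq space_borel)



lemma sum_if_less: "(k::nat) \<le> n \<Longrightarrow> (\<Sum>j<n. if j < k then g j else 0) = (\<Sum>j<k. (g j :: real))"
  by (rule sum.mono_neutral_cong_right) auto

lemma emeasure_discr':
  assumes A: "A \<in> sets borel" and nn: "\<And>i. i < length xs \<Longrightarrow> ps ! i \<ge> 0"
  shows "emeasure (discr ps xs) A = ennreal (\<Sum>i<length xs. ps ! i * indicator A (xs ! i))"
  unfolding emeasure_discr[OF A]
  by (subst sum_ennreal[symmetric]) (auto simp: nn ennreal_mult ennreal_indicator)

lemma cdf_discr:
  assumes nn: "\<And>i. i < length xs \<Longrightarrow> ps ! i \<ge> 0"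
  shows "cdf_of (discr ps xs) x = (\<Sum>i<length xs. ps ! i * indicator {..x} (xs ! i))"
proof -
  have "0 \<le> (\<Sum>i<length xs. ps ! i * indicator {..x} (xs ! i))"
    by (rule sum_nonneg) (simp add: nn)
  then show ?thesis unfolding cdf_of_def measure_def
    by (subst emeasure_discr'[OF _ nn]) simp_all
qed

lemma quantile_discr:
  assumes nn: "\<And>i. i < length xs \<Longrightarrow> ps ! i \<ge> 0" and s: "sorted xs"
    and i: "i < length xs"
    and t1: "(\<Sum>j<i. ps ! j) \<le> t" and t2: "t < (\<Sum>j<Suc i. ps ! j)"
  shows "quantile (discr ps xs) t = xs ! i"
proof -
  let ?n = "length xs"
  have "{x. cdf_of (discr ps xs) x \<le> t} = {..<xs ! i}"
  proof (intro set_eqI iffI)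
    fix x assume "x \<in> {..<xs ! i}"
    then have x: "x < xs ! i" by simp
    have "cdf_of (discr ps xs) x = (\<Sum>j<?n. ps ! j * indicator {..x} (xs ! j))"
      by (rule cdf_discr[OF nn])
    also have "\<dots> \<le> (\<Sum>j<?n. if j < i then ps ! j else 0)"
    proof (rule sum_mono)
      fix j assume j: "j \<in> {..<?n}"
      show "ps ! j * indicator {..x} (xs ! j) \<le> (if j < i then ps ! j else 0)"
      proof (cases "j < i")
        case False
        then have "xs ! i \<le> xs ! j" using j s by (simp add: sorted_nth_mono)
        then show ?thesis using x False by (auto simp: indicator_def)
      qed (use nn j in \<open>auto simp: indicator_def\<close>)
    qed
    also have "\<dots> = (\<Sum>j<i. ps ! j)" using i by (simp add: sum_if_less)
    finally show "x \<in> {x. cdf_of (discr ps xs) x \<le> t}" using t1 by simp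
  next
    fix x assume "x \<in> {x. cdf_of (discr ps xs) x \<le> t}"
    then have c: "cdf_of (discr ps xs) x \<le> t" by simp
    show "x \<in> {..<xs ! i}"
    proof (rule ccontr)
      assume "x \<notin> {..<xs ! i}"
      then have x: "xs ! i \<le> x" by simp
      have "(\<Sum>j<Suc i. ps ! j) = (\<Sum>j<?n. if j < Suc i then ps ! j else 0)"
        using i by (simp add: sum_if_less)
      also have "\<dots> \<le> (\<Sum>j<?n. ps ! j * indicator {..x} (xs ! j))"
      proof (rule sum_mono)
        fix j assume j: "j \<in> {..<?n}"
        show "(if j < Suc i then ps ! j else 0) \<le> ps ! j * indicator {..x} (xs ! j)"
        proof (cases "j < Suc i")
          case True
          then have "xs ! j \<le> xs ! i" using i s by (simp add: sorted_nth_mono)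
          then show ?thesis using x True by (auto simp: indicator_def)
        qed (use nn j in \<open>auto simp: indicator_def\<close>)
      qed
      also have "\<dots> = cdf_of (discr ps xs) x"
        by (rule cdf_discr[OF nn, symmetric])
      finally show False using c t2 by simp
    qed
  qed
  then show ?thesis unfolding quantile_def by simp
qed



lemma supp_discr:
  assumes nn: "\<And>i. i < length xs \<Longrightarrow> ps ! i \<ge> 0" and z: "z \<in> supp (discr ps xs)"
  shows "\<exists>i<length xs. ps ! i > 0 \<and> xs ! i = z"
proof (rule ccontr)
  assume H: "\<not> ?thesis"
  define D where "D = insert 1 ((\<lambda>i. \<bar>z - xs ! i\<bar>) ` {i. i < length xs \<and> ps ! i > 0})"
  have fD: "finite D" unfolding D_def by simp
  have pos: "\<forall>d\<in>D. d > 0"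
  proof
    fix d assume "d \<in> D"
    then consider "d = 1" | i where "i < length xs" "ps ! i > 0" "d = \<bar>z - xs ! i\<bar>"
      unfolding D_def by auto
    then show "d > 0"
    proof cases
      case (2 i)
      then have "xs ! i \<noteq> z" using H by blast
      then show ?thesis using 2 by simp
    qed simp
  qed
  define e where "e = Min D"
  have Dne: "D \<noteq> {}" unfolding D_def by simp
  have e0: "e > 0" unfolding e_def using fD Dne pos by (simp add: Min_gr_iff)
  have "emeasure (discr ps xs) {z - e<..<z + e} = ennreal (\<Sum>i<length xs. ps ! i * indicator {z - e<..<z + e} (xs ! i))"
    by (rule emeasure_discr'[OF _ nn]) auto
  also have "(\<Sum>i<length xs. ps ! i * indicator {z - e<..<z + e} (xs ! i)) = 0"
  proof (rule sum.neutral, rule ballI)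
    fix i assume i: "i \<in> {..<length xs}"
    show "ps ! i * indicator {z - e<..<z + e} (xs ! i) = 0"
    proof (cases "ps ! i > 0")
      case True
      then have "\<bar>z - xs ! i\<bar> \<in> D" unfolding D_def using i by auto
      then have "e \<le> \<bar>z - xs ! i\<bar>" unfolding e_def using fD by (rule Min_le[rotated])
      then have "xs ! i \<notin> {z - e<..<z + e}" by auto
      then show ?thesis by simp
    next
      case False
      then show ?thesis using nn[of i] i by auto
    qed
  qed
  finally have "emeasure (discr ps xs) {z - e<..<z + e} = 0" by simp
  moreover have "emeasure (discr ps xs) {z - e<..<z + e} > 0"
    using z e0 unfolding supp_def mem_Collect_eq by (elim allE impE)
  ultimately show False by simp
qed



lemma prob_real_rd: "prob_real M \<Longrightarrow> real_distribution M"
  unfolding prob_real_def real_distribution_def real_distribution_axioms_def by simp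

lemma cdf_of_eq: "cdf_of M = cdf M"
  by (simp add: cdf_of_def cdf_def fun_eq_iff)

lemma supp_closed:
  assumes sM: "sets M = sets borel"
  shows "closed (supp M)"
  unfolding closed_def open_dist
proof (intro ballI)
  fix x assume "x \<in> - supp M"
  then obtain e where e: "e > 0" "\<not> emeasure M {x - e<..<x + e} > 0"
    unfolding supp_def by auto
  then have e0: "emeasure M {x - e<..<x + e} = 0" by (simp add: not_gr_zero)
  show "\<exists>d>0. \<forall>y. dist y x < d \<longrightarrow> y \<in> - supp M"
  proof (intro exI[of _ "e/2"] conjI allI impI)
    show "e/2 > 0" using e by simp
    fix y assume "dist y x < e/2"
    then have "\<bar>y - x\<bar> < e/2" by (simp only: dist_real_def)
    then have d: "-(e/2) < y - x \<and> y - x < e/2" by arith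
    have sub: "{y - e/2<..<y + e/2} \<subseteq> {x - e<..<x + e}"
    proof
      fix w assume "w \<in> {y - e/2<..<y + e/2}"
      then show "w \<in> {x - e<..<x + e}" using d by simp
    qed
    have "emeasure M {y - e/2<..<y + e/2} \<le> emeasure M {x - e<..<x + e}"
      by (rule emeasure_mono[OF sub]) (simp add: sM)
    then have "emeasure M {y - e/2<..<y + e/2} = 0" using e0 by simp
    then show "y \<in> - supp M" unfolding supp_def using \<open>e/2 > 0\<close>
      by (auto intro!: exI[of _ "e/2"])
  qed
qed

context
  fixes M :: "real measure"
  assumes rd: "real_distribution M"
begin

interpretation real_distribution M by (rule rd)

lemma q_ne: "0 < t \<Longrightarrow> {x. cdf_of M x \<le> t} \<noteq> {}"
proof -
  assume t: "0 < t"
  have "eventually (\<lambda>x. cdf M x < t) at_bot"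
    by (rule order_tendstoD(2)[OF cdf_lim_at_bot t])
  then obtain N where "\<forall>x\<le>N. cdf M x < t" by (auto simp: eventually_at_bot_linorder)
  then have "N \<in> {x. cdf_of M x \<le> t}" by (simp add: cdf_of_eq less_imp_le)
  then show ?thesis by blast
qed

lemma q_bdd: "t < 1 \<Longrightarrow> bdd_above {x. cdf_of M x \<le> t}"
proof -
  assume t: "t < 1"
  have "eventually (\<lambda>x. t < cdf M x) at_top"
    by (rule order_tendstoD(1)[OF cdf_lim_at_top_prob t])
  then obtain N where N: "\<forall>x\<ge>N. t < cdf M x" by (auto simp: eventually_at_top_linorder)
  show ?thesis
  proof (rule bdd_aboveI[of _ N])
    fix x assume "x \<in> {x. cdf_of M x \<le> t}"
    then have "cdf M x \<le> t" by (simp add: cdf_of_eq)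
    then show "x \<le> N" using N by (meson not_le less_imp_le not_less)
  qed
qed

lemma q_below: "0 < t \<Longrightarrow> t < 1 \<Longrightarrow> x < quantile M t \<Longrightarrow> cdf_of M x \<le> t"
proof -
  assume t: "0 < t" "t < 1" and x: "x < quantile M t"
  then obtain y where y: "cdf_of M y \<le> t" "x < y"
    unfolding quantile_def using less_cSup_iff[OF q_ne[OF t(1)] q_bdd[OF t(2)]] by auto
  have "cdf_of M x \<le> cdf_of M y" using y(2) by (simp add: cdf_of_eq cdf_nondecreasing)
  then show ?thesis using y(1) by simp
qed

lemma q_above: "0 < t \<Longrightarrow> t < 1 \<Longrightarrow> quantile M t < x \<Longrightarrow> t < cdf_of M x"
proof (rule ccontr)
  assume t: "0 < t" "t < 1" and x: "quantile M t < x" and "\<not> t < cdf_of M x"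
  then have "x \<in> {x. cdf_of M x \<le> t}" by simp
  then have "x \<le> quantile M t" unfolding quantile_def by (rule cSup_upper[OF _ q_bdd[OF t(2)]])
  then show False using x by simp
qed

lemma q_mono: "0 < s \<Longrightarrow> s \<le> t \<Longrightarrow> t < 1 \<Longrightarrow> quantile M s \<le> quantile M t"
  unfolding quantile_def
  by (rule cSup_subset_mono[OF q_ne q_bdd]) auto

lemma q_supp: "0 < t \<Longrightarrow> t < 1 \<Longrightarrow> quantile M t \<in> supp M"
  unfolding supp_def mem_Collect_eq
proof (intro allI impI)
  fix e :: real assume t: "0 < t" "t < 1" and e: "e > 0"
  let ?q = "quantile M t"
  have a: "cdf M (?q - e) \<le> t" using q_below[OF t, of "?q - e"] e by (simp add: cdf_of_eq)
  have b: "t < cdf M (?q + e/2)" using q_above[OF t, of "?q + e/2"] e by (simp add: cdf_of_eq)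
  have "measure M {?q - e<..?q + e/2} = cdf M (?q + e/2) - cdf M (?q - e)"
    using e by (subst cdf_diff_eq) auto
  then have "measure M {?q - e<..?q + e/2} > 0" using a b by simp
  then have "emeasure M {?q - e<..?q + e/2} > 0" by (simp add: emeasure_eq_measure)
  also have "emeasure M {?q - e<..?q + e/2} \<le> emeasure M {?q - e<..<?q + e}"
    using e by (intro emeasure_mono) auto
  finally show "emeasure M {?q - e<..<?q + e} > 0" .
qed

lemma q_mono_on: "mono_on {0<..<1} (quantile M)"
  unfolding mono_on_def by (auto intro: q_mono)

end



locale P5 =
  fixes r :: real and \<mu> :: "real measure" and n :: nat and p :: "real list"
  assumes r1: "1 \<le> r" and rd: "real_distribution \<mu>" and pn: "p \<in> Pi_simplex n"
begin

definition "S k = (\<Sum>j<k. p ! j)"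
definition "Jo i = {S i<..<S (Suc i)}"
definition "Q1 t = indicator {0<..<1::real} t * quantile \<mu> t"
definition "g i c = integral\<^sup>L lborel (\<lambda>t. indicator (Jo i) t * \<bar>c - Q1 t\<bar> powr r)"

lemma len: "length p = n" using pn by (simp add: Pi_simplex_def)
lemma nn: "i < n \<Longrightarrow> 0 \<le> p ! i" using pn by (simp add: Pi_simplex_def)
lemma S0: "S 0 = 0" by (simp add: S_def)
lemma Sn: "S n = 1"
  using pn by (auto simp: Pi_simplex_def S_def sum_list_sum_nth atLeast0LessThan)
lemma S_Suc: "S (Suc i) = S i + p ! i" by (simp add: S_def)
lemma S_mono: "k \<le> l \<Longrightarrow> l \<le> n \<Longrightarrow> S k \<le> S l"
  unfolding S_def by (rule sum_mono2) (auto intro: nn)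
lemma S_nonneg: "k \<le> n \<Longrightarrow> 0 \<le> S k" using S_mono[of 0 k] by (simp add: S0)
lemma S_le1: "k \<le> n \<Longrightarrow> S k \<le> 1" using S_mono[of k n] by (simp add: Sn)
lemma n_pos: "0 < n" using Sn S0 by (cases n) auto

lemma part: "S 0 \<le> t \<Longrightarrow> t < S m \<Longrightarrow> \<exists>i<m. S i \<le> t \<and> t < S (Suc i)"
proof (induction m)
  case 0 then show ?case by simp
next
  case (Suc m)
  show ?case
  proof (cases "t < S m")
    case True then show ?thesis using Suc by (meson less_SucI)
  next
    case False then show ?thesis using Suc by (intro exI[of _ m]) auto
  qed
qed

lemma uniq:
  assumes "i < n" "j < n" "S i \<le> t" "t < S (Suc i)" "S j \<le> t" "t < S (Suc j)"
  shows "i = j"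
proof (rule ccontr)
  assume "i \<noteq> j"
  then consider "i < j" | "j < i" by linarith
  then show False
  proof cases
    case 1 then have "S (Suc i) \<le> S j" using assms by (intro S_mono) auto
    then show False using assms by simp
  next
    case 2 then have "S (Suc j) \<le> S i" using assms by (intro S_mono) auto
    then show False using assms by simp
  qed
qed

lemma Jo_sub: "i < n \<Longrightarrow> Jo i \<subseteq> {0<..<1}"
  unfolding Jo_def using S_nonneg[of i] S_le1[of "Suc i"] by auto

lemma q_mono_on: "mono_on {0<..<1} (quantile \<mu>)" by (rule q_mono_on[OF rd])

lemma Q1_meas[measurable]: "Q1 \<in> borel_measurable borel"
proof -
  have "quantile \<mu> \<in> borel_measurable (restrict_space borel {0<..<1})"
    by (rule borel_measurable_mono_on_fnc[OF q_mono_on])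
  then have "(\<lambda>t. indicator {0<..<1::real} t *\<^sub>R quantile \<mu> t) \<in> borel_measurable borel"
    by (subst borel_measurable_restrict_space_iff[symmetric]) auto
  then show ?thesis unfolding Q1_def[abs_def] by simp
qed

lemma Q1_meas_lborel[measurable]: "Q1 \<in> borel_measurable lborel"
  using Q1_meas by simp

lemma Q1_eq: "t \<in> {0<..<1} \<Longrightarrow> Q1 t = quantile \<mu> t" by (simp add: Q1_def)

lemma quantile_discr_in:
  assumes y: "y \<in> Xi n" and t: "0 < t" "t < 1"
  shows "\<exists>i<n. S i \<le> t \<and> t < S (Suc i) \<and> quantile (discr p y) t = y ! i"
proof -
  obtain i where i: "i < n" "S i \<le> t" "t < S (Suc i)"
    using part[of t n] t by (auto simp: S0 Sn)
  have "quantile (discr p y) t = y ! i"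
    using y i len by (intro quantile_discr) (auto simp: Xi_def nn S_def)
  then show ?thesis using i by blast
qed

lemma rep:
  assumes y: "y \<in> Xi n"
  shows "indicator {0<..<1} t * \<bar>quantile (discr p y) t - quantile \<mu> t\<bar> powr r =
    (\<Sum>i<n. indicator {S i..<S (Suc i)} t * (indicator {0<..<1} t * \<bar>y ! i - Q1 t\<bar> powr r))"
proof (cases "t \<in> {0<..<1}")
  case False then show ?thesis by simp
next
  case True
  then obtain i where i: "i < n" "S i \<le> t" "t < S (Suc i)" "quantile (discr p y) t = y ! i"
    using quantile_discr_in[OF y] by auto
  have "(\<Sum>j<n. indicator {S j..<S (Suc j)} t * (indicator {0<..<1} t * \<bar>y ! j - Q1 t\<bar> powr r))
      = (\<Sum>j<n. if j = i then \<bar>y ! i - quantile \<mu> t\<bar> powr r else 0)"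
  proof (rule sum.cong[OF refl])
    fix j assume j: "j \<in> {..<n}"
    show "indicator {S j..<S (Suc j)} t * (indicator {0<..<1} t * \<bar>y ! j - Q1 t\<bar> powr r)
        = (if j = i then \<bar>y ! i - quantile \<mu> t\<bar> powr r else 0)"
    proof (cases "j = i")
      case True then show ?thesis using i True \<open>t \<in> _\<close> by (simp add: Q1_eq)
    next
      case False
      then have "t \<notin> {S j..<S (Suc j)}" using uniq[of i j t] i j by auto
      then show ?thesis using False by simp
    qed
  qed
  also have "\<dots> = \<bar>y ! i - quantile \<mu> t\<bar> powr r" using i by simp
  finally show ?thesis using True i by simp
qed

end


lemma powr_tri:
  fixes a b r :: real
  assumes r: "0 \<le> r"
  shows "\<bar>a - b\<bar> powr r \<le> 2 powr r * (\<bar>a\<bar> powr r + \<bar>b\<bar> powr r)"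
proof -
  have "\<bar>a - b\<bar> \<le> 2 * max \<bar>a\<bar> \<bar>b\<bar>" by linarith
  then have "\<bar>a - b\<bar> powr r \<le> (2 * max \<bar>a\<bar> \<bar>b\<bar>) powr r"
    by (intro powr_mono2 r) auto
  also have "\<dots> = 2 powr r * max \<bar>a\<bar> \<bar>b\<bar> powr r" by (simp add: powr_mult)
  also have "max \<bar>a\<bar> \<bar>b\<bar> powr r \<le> \<bar>a\<bar> powr r + \<bar>b\<bar> powr r"
    by (cases "\<bar>a\<bar> \<le> \<bar>b\<bar>") (auto simp: max_def)
  then have "2 powr r * max \<bar>a\<bar> \<bar>b\<bar> powr r \<le> 2 powr r * (\<bar>a\<bar> powr r + \<bar>b\<bar> powr r)"
    by (intro mult_left_mono) auto
  finally show ?thesis .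
qed

lemma abs_le_powr:
  fixes x r :: real
  assumes r: "1 \<le> r"
  shows "\<bar>x\<bar> \<le> \<bar>x\<bar> powr r + 1"
proof (cases "\<bar>x\<bar> \<le> 1")
  case True then show ?thesis by (smt (verit) powr_ge_zero)
next
  case False
  then have "\<bar>x\<bar> powr 1 \<le> \<bar>x\<bar> powr r" by (intro powr_mono r) auto
  then show ?thesis by simp
qed

context P5 begin

definition "HI \<longleftrightarrow> integrable lborel (\<lambda>t. indicator {0<..<1::real} t * \<bar>Q1 t\<bar> powr r)"

lemma int_Jo_const: "integrable lborel (\<lambda>t. indicator (Jo i) t * (c::real))"
proof -
  have "emeasure lborel {S i<..<S (Suc i)} < \<infinity>"
    by (cases "S i \<le> S (Suc i)") auto
  then show ?thesis unfolding Jo_def by (intro integrable_mult_left integrable_real_indicator) auto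
qed

lemma int_J:
  assumes HI: HI and i: "i < n"
  shows "integrable lborel (\<lambda>t. indicator (Jo i) t * \<bar>c - Q1 t\<bar> powr r)"
proof (rule Bochner_Integration.integrable_bound)
  show "integrable lborel (\<lambda>t. 2 powr r * (indicator (Jo i) t * \<bar>c\<bar> powr r + indicator {0<..<1::real} t * \<bar>Q1 t\<bar> powr r))"
    using HI unfolding HI_def
    by (intro integrable_mult_right Bochner_Integration.integrable_add int_Jo_const)
  show "(\<lambda>t. indicator (Jo i) t * \<bar>c - Q1 t\<bar> powr r) \<in> borel_measurable lborel"
    unfolding Jo_def by measurable
  show "AE t in lborel. norm (indicator (Jo i) t * \<bar>c - Q1 t\<bar> powr r)
     \<le> norm (2 powr r * (indicator (Jo i) t * \<bar>c\<bar> powr r + indicator {0<..<1::real} t * \<bar>Q1 t\<bar> powr r))"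
  proof (rule AE_I2)
    fix t
    show "norm (indicator (Jo i) t * \<bar>c - Q1 t\<bar> powr r)
     \<le> norm (2 powr r * (indicator (Jo i) t * \<bar>c\<bar> powr r + indicator {0<..<1::real} t * \<bar>Q1 t\<bar> powr r))"
    proof (cases "t \<in> Jo i")
      case True
      then have "t \<in> {0<..<1}" using Jo_sub[OF i] by auto
      then show ?thesis using True powr_tri[of r c "Q1 t"] r1 by simp
    qed simp
  qed
qed

lemma int_J_abs:
  assumes HI: HI and i: "i < n"
  shows "integrable lborel (\<lambda>t. indicator (Jo i) t * \<bar>Q1 t\<bar>)"
proof (rule Bochner_Integration.integrable_bound)
  show "integrable lborel (\<lambda>t. indicator (Jo i) t * 1 + indicator {0<..<1::real} t * \<bar>Q1 t\<bar> powr r)"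
    using HI unfolding HI_def by (intro Bochner_Integration.integrable_add int_Jo_const)
  show "(\<lambda>t. indicator (Jo i) t * \<bar>Q1 t\<bar>) \<in> borel_measurable lborel"
    unfolding Jo_def by measurable
  show "AE t in lborel. norm (indicator (Jo i) t * \<bar>Q1 t\<bar>)
     \<le> norm (indicator (Jo i) t * 1 + indicator {0<..<1::real} t * \<bar>Q1 t\<bar> powr r)"
  proof (rule AE_I2)
    fix t
    show "norm (indicator (Jo i) t * \<bar>Q1 t\<bar>)
     \<le> norm (indicator (Jo i) t * 1 + indicator {0<..<1::real} t * \<bar>Q1 t\<bar> powr r)"
    proof (cases "t \<in> Jo i")
      case True
      then have "t \<in> {0<..<1}" using Jo_sub[OF i] by auto
      then show ?thesis using True abs_le_powr[OF r1, of "Q1 t"] by simp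
    qed simp
  qed
qed

lemma d_rep:
  assumes HI: HI and y: "y \<in> Xi n"
  shows "d_r r (discr p y) \<mu> = (\<Sum>i<n. g i (y ! i)) powr (1 / r)"
proof -
  have "(LBINT t:{0<..<1}. \<bar>quantile (discr p y) t - quantile \<mu> t\<bar> powr r)
      = integral\<^sup>L lborel (\<lambda>t. \<Sum>i<n. indicator {S i..<S (Suc i)} t * (indicator {0<..<1} t * \<bar>y ! i - Q1 t\<bar> powr r))"
    unfolding set_lebesgue_integral_def using rep[OF y] by simp
  also have "\<dots> = integral\<^sup>L lborel (\<lambda>t. \<Sum>i<n. indicator (Jo i) t * \<bar>y ! i - Q1 t\<bar> powr r)"
  proof (rule integral_cong_AE)
    show "(\<lambda>t. \<Sum>i<n. indicator {S i..<S (Suc i)} t * (indicator {0<..<1} t * \<bar>y ! i - Q1 t\<bar> powr r)) \<in> borel_measurable lborel"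
      by measurable
    show "(\<lambda>t. \<Sum>i<n. indicator (Jo i) t * \<bar>y ! i - Q1 t\<bar> powr r) \<in> borel_measurable lborel"
      unfolding Jo_def by measurable
    have "AE t in lborel. t \<notin> S ` {..n}"
      by (intro AE_not_in finite_imp_null_set_lborel) auto
    then show "AE t in lborel. (\<Sum>i<n. indicator {S i..<S (Suc i)} t * (indicator {0<..<1} t * \<bar>y ! i - Q1 t\<bar> powr r))
        = (\<Sum>i<n. indicator (Jo i) t * \<bar>y ! i - Q1 t\<bar> powr r)"
    proof eventually_elim
      case (elim t)
      show ?case
      proof (rule sum.cong[OF refl])
        fix i assume i: "i \<in> {..<n}"
        then have ti: "t \<noteq> S i" using elim by auto
        have "indicator {S i..<S (Suc i)} t * indicator {0<..<1} t = (indicator (Jo i) t :: real)"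
        proof (cases "t \<in> Jo i")
          case True then show ?thesis using Jo_sub[of i] i by (auto simp: Jo_def)
        next
          case False then show ?thesis using ti by (auto simp: Jo_def indicator_def)
        qed
        then show "indicator {S i..<S (Suc i)} t * (indicator {0<..<1} t * \<bar>y ! i - Q1 t\<bar> powr r)
            = indicator (Jo i) t * \<bar>y ! i - Q1 t\<bar> powr r"
          by (metis mult.assoc)
      qed
    qed
  qed
  also have "\<dots> = (\<Sum>i<n. g i (y ! i))"
    unfolding g_def by (rule Bochner_Integration.integral_sum) (use int_J[OF HI] in auto)
  finally show ?thesis unfolding d_r_def by simp
qed

lemma d_nonneg: "0 \<le> d_r r M N" unfolding d_r_def by simp

lemma quantile_discr_bound:
  assumes y: "y \<in> Xi n" and t: "0 < t" "t < 1"
  shows "\<bar>quantile (discr p y) t\<bar> \<le> (\<Sum>i<n. \<bar>y ! i\<bar>)"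
proof -
  obtain i where i: "i < n" "quantile (discr p y) t = y ! i"
    using quantile_discr_in[OF y t] by auto
  have "\<bar>y ! i\<bar> \<le> (\<Sum>i<n. \<bar>y ! i\<bar>)"
    using i by (intro member_le_sum) auto
  then show ?thesis using i by simp
qed

lemma d_zero:
  assumes HI: "\<not> HI" and y: "y \<in> Xi n"
  shows "d_r r (discr p y) \<mu> = 0"
proof -
  define B where "B = (\<Sum>i<n. \<bar>y ! i\<bar>)"
  have "\<not> integrable lborel (\<lambda>t. indicator {0<..<1::real} t *\<^sub>R \<bar>quantile (discr p y) t - quantile \<mu> t\<bar> powr r)"
  proof
    assume I: "integrable lborel (\<lambda>t. indicator {0<..<1::real} t *\<^sub>R \<bar>quantile (discr p y) t - quantile \<mu> t\<bar> powr r)"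
    have "HI" unfolding HI_def
    proof (rule Bochner_Integration.integrable_bound)
      show "integrable lborel (\<lambda>t. 2 powr r * (indicator {0<..<1::real} t *\<^sub>R \<bar>quantile (discr p y) t - quantile \<mu> t\<bar> powr r
          + indicator {0<..<1::real} t * \<bar>B\<bar> powr r))"
        using I by (intro integrable_mult_right Bochner_Integration.integrable_add integrable_mult_left integrable_real_indicator) auto
      show "(\<lambda>t. indicator {0<..<1::real} t * \<bar>Q1 t\<bar> powr r) \<in> borel_measurable lborel"
        by measurable
      show "AE t in lborel. norm (indicator {0<..<1::real} t * \<bar>Q1 t\<bar> powr r) \<le>
          norm (2 powr r * (indicator {0<..<1::real} t *\<^sub>R \<bar>quantile (discr p y) t - quantile \<mu> t\<bar> powr r
          + indicator {0<..<1::real} t * \<bar>B\<bar> powr r))"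
      proof (rule AE_I2)
        fix t
        show "norm (indicator {0<..<1::real} t * \<bar>Q1 t\<bar> powr r) \<le>
          norm (2 powr r * (indicator {0<..<1::real} t *\<^sub>R \<bar>quantile (discr p y) t - quantile \<mu> t\<bar> powr r
          + indicator {0<..<1::real} t * \<bar>B\<bar> powr r))"
        proof (cases "t \<in> {0<..<1}")
          case True
          then have b: "\<bar>quantile (discr p y) t\<bar> \<le> \<bar>B\<bar>"
            using quantile_discr_bound[OF y, of t] unfolding B_def by auto
          have "\<bar>Q1 t\<bar> powr r = \<bar>quantile (discr p y) t - (quantile (discr p y) t - quantile \<mu> t)\<bar> powr r"
            using True by (simp add: Q1_eq)
          also have "\<dots> \<le> 2 powr r * (\<bar>quantile (discr p y) t\<bar> powr r + \<bar>quantile (discr p y) t - quantile \<mu> t\<bar> powr r)"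
            using r1 by (intro powr_tri) auto
          also have "\<dots> \<le> 2 powr r * (\<bar>B\<bar> powr r + \<bar>quantile (discr p y) t - quantile \<mu> t\<bar> powr r)"
            using b r1 by (intro mult_left_mono add_right_mono powr_mono2) auto
          finally show ?thesis using True by (simp add: add.commute)
        qed simp
      qed
    qed
    then show False using HI by simp
  qed
  then show ?thesis
    unfolding d_r_def set_lebesgue_integral_def using r1
    by (simp add: not_integrable_integral_eq)
qed

end


context P5 begin

definition "Pos = {k. k < n \<and> 0 < p ! k}"

lemma Pos_ne: "\<exists>k. k \<in> Pos"
proof (rule ccontr)
  assume "\<not> (\<exists>k. k \<in> Pos)"
  then have "\<forall>k<n. p ! k = 0" using nn by (force simp: Pos_def)
  then have "S n = 0" by (simp add: S_def)
  then show False using Sn by simp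
qed

definition "sel i = (if \<exists>k\<le>i. k \<in> Pos then (GREATEST k. k \<le> i \<and> k \<in> Pos) else (LEAST k. k \<in> Pos))"

lemma sel_Pos: "sel i \<in> Pos"
proof (cases "\<exists>k\<le>i. k \<in> Pos")
  case True
  then obtain k where "k \<le> i \<and> k \<in> Pos" by blast
  then have "(GREATEST k. k \<le> i \<and> k \<in> Pos) \<le> i \<and> (GREATEST k. k \<le> i \<and> k \<in> Pos) \<in> Pos"
    by (rule GreatestI_nat[where b = i]) auto
  then show ?thesis using True by (simp add: sel_def)
next
  case False
  then show ?thesis using Pos_ne by (simp add: sel_def) (metis LeastI)
qed

lemma sel_id: "i \<in> Pos \<Longrightarrow> sel i = i"
proof -
  assume i: "i \<in> Pos"
  have "i \<le> (GREATEST k. k \<le> i \<and> k \<in> Pos)"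
    by (rule Greatest_le_nat[where b = i]) (use i in auto)
  moreover have "(GREATEST k. k \<le> i \<and> k \<in> Pos) \<le> i"
    by (rule conjunct1[OF GreatestI_nat[where b = i and k = i]]) (use i in auto)
  ultimately show ?thesis using i by (auto simp: sel_def)
qed

lemma sel_mono: "i \<le> j \<Longrightarrow> sel i \<le> sel j"
proof -
  assume ij: "i \<le> j"
  show ?thesis
  proof (cases "\<exists>k\<le>i. k \<in> Pos")
    case True
    then obtain k where k: "k \<le> i" "k \<in> Pos" by blast
    have g: "(GREATEST k. k \<le> i \<and> k \<in> Pos) \<le> i \<and> (GREATEST k. k \<le> i \<and> k \<in> Pos) \<in> Pos"
      by (rule GreatestI_nat[where b = i]) (use k in auto)
    have "(GREATEST k. k \<le> i \<and> k \<in> Pos) \<le> (GREATEST k. k \<le> j \<and> k \<in> Pos)"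
      by (rule Greatest_le_nat[where b = j]) (use g ij in auto)
    moreover have Tj: "\<exists>k\<le>j. k \<in> Pos" using k ij le_trans by blast
    ultimately show ?thesis unfolding sel_def using True Tj by (simp only: if_P)
  next
    case False
    note F = False
    show ?thesis
    proof (cases "\<exists>k\<le>j. k \<in> Pos")
      case True
      then obtain k where k: "k \<le> j" "k \<in> Pos" by blast
      have g: "(GREATEST k. k \<le> j \<and> k \<in> Pos) \<le> j \<and> (GREATEST k. k \<le> j \<and> k \<in> Pos) \<in> Pos"
        by (rule GreatestI_nat[where b = j]) (use k in auto)
      then have "(LEAST k. k \<in> Pos) \<le> (GREATEST k. k \<le> j \<and> k \<in> Pos)"
        by (intro Least_le) auto
      then show ?thesis unfolding sel_def using True F by (simp only: if_P if_not_P if_False)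
    next
      case False
      then show ?thesis unfolding sel_def using F by (simp only: if_not_P if_False order.refl)
    qed
  qed
qed

lemma assemble:
  assumes mono: "\<And>i j. i \<in> Pos \<Longrightarrow> j \<in> Pos \<Longrightarrow> i < j \<Longrightarrow> c i \<le> c j"
    and sp: "\<And>i. i \<in> Pos \<Longrightarrow> c i \<in> supp \<mu>"
  shows "\<exists>x \<in> Xi n. (\<forall>i\<in>Pos. x ! i = c i) \<and> supp (discr p x) \<subseteq> supp \<mu>"
proof -
  define x where "x = map (\<lambda>i. c (sel i)) [0..<n]"
  have lx: "length x = n" by (simp add: x_def)
  have xi: "i < n \<Longrightarrow> x ! i = c (sel i)" for i by (simp add: x_def)
  have "sorted x"
    unfolding sorted_iff_nth_mono
  proof (intro allI impI)
    fix i j assume ij: "i \<le> j" "j < length x"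
    have "sel i \<le> sel j" by (rule sel_mono[OF ij(1)])
    then consider "sel i = sel j" | "sel i < sel j" by linarith
    then have "c (sel i) \<le> c (sel j)"
    proof cases
      case 2 then show ?thesis using mono sel_Pos by blast
    qed simp
    then show "x ! i \<le> x ! j" using ij lx xi by auto
  qed
  then have X: "x \<in> Xi n" using lx by (simp add: Xi_def)
  have E: "\<forall>i\<in>Pos. x ! i = c i" using xi sel_id by (auto simp: Pos_def)
  have "supp (discr p x) \<subseteq> supp \<mu>"
  proof
    fix z assume "z \<in> supp (discr p x)"
    then obtain i where i: "i < length x" "p ! i > 0" "x ! i = z"
      using supp_discr[of x p z] nn lx by auto
    then have "i \<in> Pos" using lx by (simp add: Pos_def)
    then show "z \<in> supp \<mu>" using i E sp by auto
  qed
  then show ?thesis using X E by blast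
qed

definition "Lo i c \<longleftrightarrow> (\<forall>b. (\<forall>t\<in>Jo i. b \<le> quantile \<mu> t) \<longrightarrow> b \<le> c)"
definition "Hi i c \<longleftrightarrow> (\<forall>b. (\<forall>t\<in>Jo i. quantile \<mu> t \<le> b) \<longrightarrow> c \<le> b)"

lemma LoHi_sorted:
  assumes ij: "i < j" "j < n" and L: "Lo j d" and H: "Hi i c"
  shows "c \<le> d"
proof -
  have "\<forall>t\<in>Jo j. c \<le> quantile \<mu> t"
  proof
    fix t assume t: "t \<in> Jo j"
    have "\<forall>s\<in>Jo i. quantile \<mu> s \<le> quantile \<mu> t"
    proof
      fix s assume s: "s \<in> Jo i"
      have "S (Suc i) \<le> S j" using ij by (intro S_mono) auto
      then have "s \<le> t" using s t by (auto simp: Jo_def)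
      moreover have "0 < s" "t < 1" using s t Jo_sub[of i] Jo_sub[of j] ij by auto
      ultimately show "quantile \<mu> s \<le> quantile \<mu> t" by (intro q_mono[OF rd]) auto
    qed
    then show "c \<le> quantile \<mu> t" using H by (simp add: Hi_def)
  qed
  then show ?thesis using L by (simp add: Lo_def)
qed

lemma Jo_ne: "i \<in> Pos \<Longrightarrow> Jo i \<noteq> {}"
  by (auto simp: Jo_def Pos_def S_Suc intro!: exI[of _ "S i + p ! i / 2"])

lemma LoHi_supp:
  assumes con: "connected (supp \<mu>)" and i: "i \<in> Pos" and L: "Lo i c" and H: "Hi i c"
  shows "c \<in> supp \<mu>"
proof -
  let ?A = "quantile \<mu> ` Jo i"
  have Ane: "?A \<noteq> {}" using Jo_ne[OF i] by simp
  have in_: "n > i" using i by (simp add: Pos_def)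
  have Asupp: "?A \<subseteq> supp \<mu>"
    using Jo_sub[of i] in_ q_supp[OF rd] by auto
  have cl: "closure ?A \<subseteq> supp \<mu>"
    by (rule closure_minimal[OF Asupp supp_closed]) (use rd in \<open>simp add: real_distribution_def real_distribution_axioms_def\<close>)
  have s1: "\<exists>s\<in>supp \<mu>. s \<le> c"
  proof (cases "\<exists>t\<in>Jo i. quantile \<mu> t \<le> c")
    case True then show ?thesis using Asupp by auto
  next
    case False
    then have lb: "\<forall>t\<in>Jo i. c \<le> quantile \<mu> t" by auto
    then have bdd: "bdd_below ?A" by (auto intro: bdd_belowI)
    have "c \<le> Inf ?A" using lb Ane by (intro cInf_greatest) auto
    moreover have "\<forall>t\<in>Jo i. Inf ?A \<le> quantile \<mu> t" using bdd by (auto intro: cInf_lower)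
    then have "Inf ?A \<le> c" using L unfolding Lo_def by blast
    ultimately have "c = Inf ?A" by simp
    then have "c \<in> supp \<mu>" using closure_contains_Inf[OF Ane bdd] cl by auto
    then show ?thesis by auto
  qed
  have s2: "\<exists>s\<in>supp \<mu>. c \<le> s"
  proof (cases "\<exists>t\<in>Jo i. c \<le> quantile \<mu> t")
    case True then show ?thesis using Asupp by auto
  next
    case False
    then have ub: "\<forall>t\<in>Jo i. quantile \<mu> t \<le> c" by auto
    then have bdd: "bdd_above ?A" by (auto intro: bdd_aboveI)
    have "Sup ?A \<le> c" using ub Ane by (intro cSup_least) auto
    moreover have "\<forall>t\<in>Jo i. quantile \<mu> t \<le> Sup ?A" using bdd by (auto intro: cSup_upper)
    then have "c \<le> Sup ?A" using H unfolding Hi_def by blast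
    ultimately have "c = Sup ?A" by simp
    then have "c \<in> supp \<mu>" using closure_contains_Sup[OF Ane bdd] cl by auto
    then show ?thesis by auto
  qed
  have "is_interval (supp \<mu>)" using con by (simp add: is_interval_connected_1)
  then show ?thesis using s1 s2 unfolding is_interval_1 by blast
qed

end


lemma powr_convex_pt:
  fixes u a b q r :: real
  assumes r: "1 \<le> r" and u: "0 \<le> u" "u \<le> 1"
  shows "\<bar>(1 - u) * a + u * b - q\<bar> powr r \<le> (1 - u) * \<bar>a - q\<bar> powr r + u * \<bar>b - q\<bar> powr r"
proof -
  define \<alpha> where "\<alpha> = \<bar>a - q\<bar>"
  define \<beta> where "\<beta> = \<bar>b - q\<bar>"
  have "\<bar>(1 - u) * a + u * b - q\<bar> = \<bar>(1 - u) * (a - q) + u * (b - q)\<bar>"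
    by (simp add: algebra_simps)
  also have "\<dots> \<le> (1 - u) * \<alpha> + u * \<beta>"
    unfolding \<alpha>_def \<beta>_def using u
    by (metis abs_mult abs_of_nonneg abs_triangle_ineq diff_ge_0_iff_ge)
  finally have w: "\<bar>(1 - u) * a + u * b - q\<bar> powr r \<le> ((1 - u) * \<alpha> + u * \<beta>) powr r"
    using r by (intro powr_mono2) auto
  have ab: "\<alpha> \<ge> 0" "\<beta> \<ge> 0" by (auto simp: \<alpha>_def \<beta>_def)
  have pu: "x powr r \<le> x" if "0 \<le> x" "x \<le> 1" for x :: real
    using powr_mono'[of 1 r x] that r by simp
  have "((1 - u) * \<alpha> + u * \<beta>) powr r \<le> (1 - u) * \<alpha> powr r + u * \<beta> powr r"
  proof (cases "\<alpha> = 0")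
    case True
    have "(u * \<beta>) powr r = u powr r * \<beta> powr r" by (simp add: powr_mult)
    also have "\<dots> \<le> u * \<beta> powr r" using pu[of u] u by (intro mult_right_mono) auto
    finally show ?thesis using True by simp
  next
    case a0: False
    show ?thesis
    proof (cases "\<beta> = 0")
      case True
      have "((1 - u) * \<alpha>) powr r = (1 - u) powr r * \<alpha> powr r" by (simp add: powr_mult)
      also have "\<dots> \<le> (1 - u) * \<alpha> powr r" using pu[of "1 - u"] u by (intro mult_right_mono) auto
      finally show ?thesis using True by simp
    next
      case False
      have "convex_on {0<..} (\<lambda>x::real. x powr r)" by (rule powr_convex[OF r])
      then have "((1 - u) *\<^sub>R \<alpha> + u *\<^sub>R \<beta>) powr r \<le> (1 - u) * \<alpha> powr r + u * \<beta> powr r"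
        using a0 False ab u by (intro convex_onD) auto
      then show ?thesis by simp
    qed
  qed
  then show ?thesis using w unfolding \<alpha>_def \<beta>_def by linarith
qed

context P5 begin

definition "mid i = (S i + S (Suc i)) / 2"

lemma Pos_lt: "i \<in> Pos \<Longrightarrow> S i < S (Suc i)" by (simp add: Pos_def S_Suc)
lemma Pos_n: "i \<in> Pos \<Longrightarrow> i < n" by (simp add: Pos_def)

lemma mid_in: "i \<in> Pos \<Longrightarrow> mid i \<in> Jo i"
  using Pos_lt[of i] by (simp add: mid_def Jo_def)

lemma Jo01:
  assumes "i \<in> Pos" "t \<in> Jo i" shows "0 < t \<and> t < 1"
proof -
  have "Jo i \<subseteq> {0<..<1}" by (rule Jo_sub[OF Pos_n[OF assms(1)]])
  then show ?thesis using assms(2) by auto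
qed

lemma mid_LoHi: "i \<in> Pos \<Longrightarrow> Lo i (quantile \<mu> (mid i)) \<and> Hi i (quantile \<mu> (mid i))"
  using mid_in[of i] by (auto simp: Lo_def Hi_def)

lemma mid_supp: "i \<in> Pos \<Longrightarrow> quantile \<mu> (mid i) \<in> supp \<mu>"
  using mid_in[of i] Jo01[of i] by (intro q_supp[OF rd]) auto

lemma g_nonneg: "0 \<le> g i c" unfolding g_def by (intro integral_nonneg_AE) auto

lemma g_zero: "i < n \<Longrightarrow> i \<notin> Pos \<Longrightarrow> g i c = 0"
proof -
  assume i: "i < n" "i \<notin> Pos"
  then have "p ! i = 0" using nn[of i] by (auto simp: Pos_def)
  then have "Jo i = {}" by (simp add: Jo_def S_Suc)
  then show ?thesis by (simp add: g_def)
qed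

lemma median_min:
  assumes HI: HI and r: "r = 1" and i: "i \<in> Pos"
  shows "g i (quantile \<mu> (mid i)) \<le> g i c"
proof -
  define a where "a = S i"
  define b where "b = S (Suc i)"
  define m where "m = mid i"
  define cs where "cs = quantile \<mu> m"
  have ab: "a < b" using Pos_lt[OF i] by (simp add: a_def b_def)
  have m: "a < m" "m < b" "m - a = b - m" using ab by (simp_all add: m_def mid_def a_def b_def field_simps)
  have J: "Jo i = {a<..<b}" by (simp add: Jo_def a_def b_def)
  define \<sigma> where "\<sigma> t = (indicator {a<..<m} t - indicator {m..<b} t :: real)" for t :: real
  have int\<sigma>: "integrable lborel \<sigma>"
    unfolding \<sigma>_def using m by (intro Bochner_Integration.integrable_diff integrable_real_indicator) auto
  have i\<sigma>: "integral\<^sup>L lborel \<sigma> = 0"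
    unfolding \<sigma>_def using m
    by (subst Bochner_Integration.integral_diff) (auto intro!: integrable_real_indicator)
  have pw: "indicator (Jo i) t * \<bar>cs - Q1 t\<bar> powr r + (c - cs) * \<sigma> t \<le> indicator (Jo i) t * \<bar>c - Q1 t\<bar> powr r" for t
  proof (cases "t \<in> Jo i")
    case True
    then have t01: "0 < t" "t < 1" using Jo01[OF i] by auto
    have Qt: "Q1 t = quantile \<mu> t" using t01 by (simp add: Q1_eq)
    show ?thesis
    proof (cases "t < m")
      case True
      then have "quantile \<mu> t \<le> cs" unfolding cs_def using t01 mid_in[OF i] Jo01[OF i]
        by (intro q_mono[OF rd]) (auto simp: m_def)
      moreover have "\<sigma> t = 1" using True \<open>t \<in> Jo i\<close> J by (simp add: \<sigma>_def)
      ultimately show ?thesis using \<open>t \<in> Jo i\<close> Qt r by simp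
    next
      case False
      then have "cs \<le> quantile \<mu> t" unfolding cs_def using t01 mid_in[OF i] Jo01[OF i]
        by (intro q_mono[OF rd]) (auto simp: m_def)
      moreover have "\<sigma> t = -1" using False \<open>t \<in> Jo i\<close> J m by (simp add: \<sigma>_def)
      ultimately show ?thesis using \<open>t \<in> Jo i\<close> Qt r by simp
    qed
  next
    case False
    then have "\<sigma> t = 0" using J m by (auto simp: \<sigma>_def indicator_def)
    then show ?thesis using False by simp
  qed
  have "g i cs = g i cs + (c - cs) * integral\<^sup>L lborel \<sigma>" using i\<sigma> by simp
  also have "\<dots> = integral\<^sup>L lborel (\<lambda>t. indicator (Jo i) t * \<bar>cs - Q1 t\<bar> powr r + (c - cs) * \<sigma> t)"
    unfolding g_def using int_J[OF HI Pos_n[OF i]] int\<sigma> by simp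
  also have "\<dots> \<le> g i c"
    unfolding g_def using int_J[OF HI Pos_n[OF i]] int\<sigma>
    by (intro integral_mono pw) auto
  finally show ?thesis by (simp add: cs_def m_def)
qed

end


context P5 begin

lemma g_convex:
  assumes HI: HI and i: "i < n"
  shows "convex_on UNIV (g i)"
proof (rule convex_onI)
  fix u x y :: real assume u: "0 < u" "u < 1"
  have "g i ((1 - u) *\<^sub>R x + u *\<^sub>R y)
      \<le> integral\<^sup>L lborel (\<lambda>t. (1 - u) * (indicator (Jo i) t * \<bar>x - Q1 t\<bar> powr r) + u * (indicator (Jo i) t * \<bar>y - Q1 t\<bar> powr r))"
    unfolding g_def
  proof (intro integral_mono)
    show "integrable lborel (\<lambda>t. indicator (Jo i) t * \<bar>(1 - u) *\<^sub>R x + u *\<^sub>R y - Q1 t\<bar> powr r)"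
      by (rule int_J[OF HI i])
    show "integrable lborel (\<lambda>t. (1 - u) * (indicator (Jo i) t * \<bar>x - Q1 t\<bar> powr r) + u * (indicator (Jo i) t * \<bar>y - Q1 t\<bar> powr r))"
      using int_J[OF HI i] by (intro Bochner_Integration.integrable_add integrable_mult_right) auto
    fix t
    show "indicator (Jo i) t * \<bar>(1 - u) *\<^sub>R x + u *\<^sub>R y - Q1 t\<bar> powr r
      \<le> (1 - u) * (indicator (Jo i) t * \<bar>x - Q1 t\<bar> powr r) + u * (indicator (Jo i) t * \<bar>y - Q1 t\<bar> powr r)"
      using powr_convex_pt[OF r1, of u x y "Q1 t"] u by (cases "t \<in> Jo i") auto
  qed
  also have "\<dots> = (1 - u) * g i x + u * g i y"
    unfolding g_def using int_J[OF HI i] by simp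
  finally show "g i ((1 - u) *\<^sub>R x + u *\<^sub>R y) \<le> (1 - u) * g i x + u * g i y" .
qed simp

lemma g_cont:
  assumes HI: HI and i: "i < n"
  shows "continuous_on UNIV (g i)"
  by (rule convex_on_continuous[OF open_UNIV g_convex[OF HI i]])

lemma g_coerc:
  assumes HI: HI and i: "i \<in> Pos"
  shows "g i c \<ge> (S (Suc i) - S i) * \<bar>c\<bar> - (integral\<^sup>L lborel (\<lambda>t. indicator (Jo i) t * \<bar>Q1 t\<bar>) + (S (Suc i) - S i))"
proof -
  have in_: "i < n" using Pos_n[OF i] .
  have ab: "S i < S (Suc i)" using Pos_lt[OF i] .
  have mJ: "measure lborel (Jo i) = S (Suc i) - S i" using ab by (simp add: Jo_def)
  have intc: "integrable lborel (\<lambda>t. indicator (Jo i) t * (\<bar>c\<bar> - 1))" by (rule int_Jo_const)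
  have "integral\<^sup>L lborel (\<lambda>t. indicator (Jo i) t * (\<bar>c\<bar> - 1) - indicator (Jo i) t * \<bar>Q1 t\<bar>) \<le> g i c"
    unfolding g_def
  proof (intro integral_mono)
    show "integrable lborel (\<lambda>t. indicator (Jo i) t * (\<bar>c\<bar> - 1) - indicator (Jo i) t * \<bar>Q1 t\<bar>)"
      using intc int_J_abs[OF HI in_] by (intro Bochner_Integration.integrable_diff)
    show "integrable lborel (\<lambda>t. indicator (Jo i) t * \<bar>c - Q1 t\<bar> powr r)" by (rule int_J[OF HI in_])
    fix t
    have "\<bar>c\<bar> - 1 - \<bar>Q1 t\<bar> \<le> \<bar>c - Q1 t\<bar> powr r"
      using abs_le_powr[OF r1, of "c - Q1 t"] by linarith
    then show "indicator (Jo i) t * (\<bar>c\<bar> - 1) - indicator (Jo i) t * \<bar>Q1 t\<bar> \<le> indicator (Jo i) t * \<bar>c - Q1 t\<bar> powr r"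
      by (cases "t \<in> Jo i") auto
  qed
  also have "integral\<^sup>L lborel (\<lambda>t. indicator (Jo i) t * (\<bar>c\<bar> - 1) - indicator (Jo i) t * \<bar>Q1 t\<bar>)
      = (S (Suc i) - S i) * (\<bar>c\<bar> - 1) - integral\<^sup>L lborel (\<lambda>t. indicator (Jo i) t * \<bar>Q1 t\<bar>)"
    using intc int_J_abs[OF HI in_] mJ by (simp add: Jo_def)
  finally show ?thesis by (simp add: algebra_simps)
qed

lemma g_exists:
  assumes HI: HI and i: "i \<in> Pos"
  shows "\<exists>c0. \<forall>d. g i c0 \<le> g i d"
proof -
  define L where "L = S (Suc i) - S i"
  define K where "K = integral\<^sup>L lborel (\<lambda>t. indicator (Jo i) t * \<bar>Q1 t\<bar>) + L"
  define R where "R = (g i 0 + K) / L + 1"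
  have L: "L > 0" using Pos_lt[OF i] by (simp add: L_def)
  have co: "\<And>c. g i c \<ge> L * \<bar>c\<bar> - K" using g_coerc[OF HI i] by (simp add: L_def K_def)
  have g0: "g i 0 \<ge> 0" by (rule g_nonneg)
  have K0: "K \<ge> 0 - g i 0" using co[of 0] by simp
  then have R0: "R \<ge> 1" using L by (simp add: R_def)
  obtain c0 where c0: "c0 \<in> {-R..R}" "\<forall>y\<in>{-R..R}. g i c0 \<le> g i y"
    using continuous_attains_inf[of "{-R..R}" "g i"] continuous_on_subset[OF g_cont[OF HI Pos_n[OF i]]] R0
    by auto
  have "g i c0 \<le> g i d" for d
  proof (cases "d \<in> {-R..R}")
    case True then show ?thesis using c0 by auto
  next
    case False
    then have "\<bar>d\<bar> > R" by auto
    then have "L * \<bar>d\<bar> > L * R" using L by simp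
    moreover have "L * R = g i 0 + K + L" using L by (simp add: R_def field_simps)
    ultimately have "g i d > g i 0" using co[of d] L by linarith
    moreover have "g i c0 \<le> g i 0" using c0 R0 by auto
    ultimately show ?thesis by simp
  qed
  then show ?thesis by blast
qed

lemma g_improve:
  assumes HI: HI and i: "i \<in> Pos" and le: "\<And>t. t \<in> Jo i \<Longrightarrow> \<bar>d - quantile \<mu> t\<bar> \<le> \<bar>c - quantile \<mu> t\<bar>"
  shows "g i d \<le> g i c"
  unfolding g_def
proof (intro integral_mono int_J[OF HI Pos_n[OF i]])
  fix t
  show "indicator (Jo i) t * \<bar>d - Q1 t\<bar> powr r \<le> indicator (Jo i) t * \<bar>c - Q1 t\<bar> powr r"
  proof (cases "t \<in> Jo i")
    case True
    then have "Q1 t = quantile \<mu> t" using Jo01[OF i True] by (simp add: Q1_eq)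
    then show ?thesis using True le[OF True] r1 by (simp add: powr_mono2)
  qed simp
qed

lemma g_good:
  assumes HI: HI and i: "i \<in> Pos"
  shows "\<exists>c. (\<forall>d. g i c \<le> g i d) \<and> Lo i c \<and> Hi i c"
proof -
  obtain c0 where c0: "\<forall>d. g i c0 \<le> g i d" using g_exists[OF HI i] by blast
  let ?A = "quantile \<mu> ` Jo i"
  have Ane: "?A \<noteq> {}" using Jo_ne[OF i] by simp
  define c1 where "c1 = (if bdd_below ?A then max c0 (Inf ?A) else c0)"
  define c2 where "c2 = (if bdd_above ?A then min c1 (Sup ?A) else c1)"
  have "g i c1 \<le> g i c0"
  proof (cases "bdd_below ?A")
    case True
    show ?thesis
    proof (rule g_improve[OF HI i])
      fix t assume "t \<in> Jo i"
      then have "Inf ?A \<le> quantile \<mu> t" using True by (auto intro: cInf_lower)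
      then show "\<bar>c1 - quantile \<mu> t\<bar> \<le> \<bar>c0 - quantile \<mu> t\<bar>" using True by (simp add: c1_def)
    qed
  qed (simp add: c1_def)
  moreover have "g i c2 \<le> g i c1"
  proof (cases "bdd_above ?A")
    case True
    show ?thesis
    proof (rule g_improve[OF HI i])
      fix t assume "t \<in> Jo i"
      then have "quantile \<mu> t \<le> Sup ?A" using True by (auto intro: cSup_upper)
      then show "\<bar>c2 - quantile \<mu> t\<bar> \<le> \<bar>c1 - quantile \<mu> t\<bar>" using True by (simp add: c2_def)
    qed
  qed (simp add: c2_def)
  ultimately have m: "\<forall>d. g i c2 \<le> g i d" using c0 by (meson order_trans)
  have lo: "Lo i c2" unfolding Lo_def
  proof (intro allI impI)
    fix b assume b: "\<forall>t\<in>Jo i. b \<le> quantile \<mu> t"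
    then have bdd: "bdd_below ?A" by (auto intro: bdd_belowI)
    have bI: "b \<le> Inf ?A" using b Ane by (intro cInf_greatest) auto
    have "Inf ?A \<le> c1" using bdd by (simp add: c1_def)
    moreover have "bdd_above ?A \<Longrightarrow> Inf ?A \<le> Sup ?A" using bdd Ane by (intro cInf_le_cSup)
    ultimately have "Inf ?A \<le> c2" by (auto simp: c2_def)
    then show "b \<le> c2" using bI by simp
  qed
  have hi: "Hi i c2" unfolding Hi_def
  proof (intro allI impI)
    fix b assume b: "\<forall>t\<in>Jo i. quantile \<mu> t \<le> b"
    then have bdd: "bdd_above ?A" by (auto intro: bdd_aboveI)
    have bS: "Sup ?A \<le> b" using b Ane by (intro cSup_least) auto
    have "c2 \<le> Sup ?A" using bdd by (simp add: c2_def)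
    then show "c2 \<le> b" using bS by simp
  qed
  show ?thesis using m lo hi by blast
qed

end


context P5 begin

lemma main:
  assumes case_r: "r = 1 \<or> connected (supp \<mu>)"
  shows "\<exists>x \<in> Xi n. (\<forall>y \<in> Xi n. d_r r (discr p x) \<mu> \<le> d_r r (discr p y) \<mu>)
            \<and> supp (discr p x) \<subseteq> supp \<mu>"
proof (cases HI)
  case True
  have "\<forall>i\<in>Pos. \<exists>c. (\<forall>d. g i c \<le> g i d) \<and> Lo i c \<and> Hi i c \<and> c \<in> supp \<mu>"
  proof
    fix i assume i: "i \<in> Pos"
    show "\<exists>c. (\<forall>d. g i c \<le> g i d) \<and> Lo i c \<and> Hi i c \<and> c \<in> supp \<mu>"
    proof (cases "r = 1")
      case r: True
      have "\<forall>d. g i (quantile \<mu> (mid i)) \<le> g i d" using median_min[OF True r i] by (rule allI)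
      then show ?thesis using mid_LoHi[OF i] mid_supp[OF i] by (intro exI[of _ "quantile \<mu> (mid i)"]) simp
    next
      case False
      then have con: "connected (supp \<mu>)" using case_r by simp
      obtain c where c: "\<forall>d. g i c \<le> g i d" "Lo i c" "Hi i c" using g_good[OF True i] by blast
      then show ?thesis using LoHi_supp[OF con i c(2,3)] by (intro exI[of _ c]) simp
    qed
  qed
  then have "\<exists>c. \<forall>i\<in>Pos. (\<forall>d. g i (c i) \<le> g i d) \<and> Lo i (c i) \<and> Hi i (c i) \<and> c i \<in> supp \<mu>"
    by (rule bchoice)
  then obtain c where c0: "\<forall>i\<in>Pos. (\<forall>d. g i (c i) \<le> g i d) \<and> Lo i (c i) \<and> Hi i (c i) \<and> c i \<in> supp \<mu>"
    by (elim exE)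
  have c: "(\<forall>d. g i (c i) \<le> g i d) \<and> Lo i (c i) \<and> Hi i (c i) \<and> c i \<in> supp \<mu>" if "i \<in> Pos" for i
    by (rule bspec[OF c0 that])
  have mono: "c i \<le> c j" if ij: "i \<in> Pos" "j \<in> Pos" "i < j" for i j
  proof -
    have H: "Hi i (c i)" using c[OF ij(1)] by (elim conjE)
    have L: "Lo j (c j)" using c[OF ij(2)] by (elim conjE)
    show ?thesis by (rule LoHi_sorted[OF ij(3) Pos_n[OF ij(2)] L H])
  qed
  have sp: "c i \<in> supp \<mu>" if "i \<in> Pos" for i using c[OF that] by (elim conjE)
  have "\<exists>x \<in> Xi n. (\<forall>i\<in>Pos. x ! i = c i) \<and> supp (discr p x) \<subseteq> supp \<mu>"
    by (rule assemble[OF mono sp])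
  then obtain x where x: "x \<in> Xi n" "\<forall>i\<in>Pos. x ! i = c i" "supp (discr p x) \<subseteq> supp \<mu>"
    by (elim bexE conjE)
  have "d_r r (discr p x) \<mu> \<le> d_r r (discr p y) \<mu>" if y: "y \<in> Xi n" for y
  proof -
    have "(\<Sum>i<n. g i (x ! i)) \<le> (\<Sum>i<n. g i (y ! i))"
    proof (rule sum_mono)
      fix i assume "i \<in> {..<n}"
      show "g i (x ! i) \<le> g i (y ! i)"
      proof (cases "i \<in> Pos")
        case True
        then have "x ! i = c i" using x(2) by (rule bspec[rotated])
        moreover have "\<forall>d. g i (c i) \<le> g i d" using c[OF True] by (elim conjE)
        ultimately show ?thesis by simp
      next
        case False
        then show ?thesis using g_zero[of i] \<open>i \<in> {..<n}\<close> by simp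
      qed
    qed
    then have "(\<Sum>i<n. g i (x ! i)) powr (1 / r) \<le> (\<Sum>i<n. g i (y ! i)) powr (1 / r)"
      using r1 g_nonneg by (intro powr_mono2 sum_nonneg) auto
    then show ?thesis using d_rep[OF True x(1)] d_rep[OF True y] by simp
  qed
  then show ?thesis using x by blast
next
  case False
  have mono: "quantile \<mu> (mid i) \<le> quantile \<mu> (mid j)" if ij: "i \<in> Pos" "j \<in> Pos" "i < j" for i j
  proof -
    have H: "Hi i (quantile \<mu> (mid i))" using mid_LoHi[OF ij(1)] by (elim conjE)
    have L: "Lo j (quantile \<mu> (mid j))" using mid_LoHi[OF ij(2)] by (elim conjE)
    show ?thesis by (rule LoHi_sorted[OF ij(3) Pos_n[OF ij(2)] L H])
  qed
  have "\<exists>x \<in> Xi n. (\<forall>i\<in>Pos. x ! i = quantile \<mu> (mid i)) \<and> supp (discr p x) \<subseteq> supp \<mu>"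
    by (rule assemble[OF mono mid_supp])
  then obtain x where x: "x \<in> Xi n" "supp (discr p x) \<subseteq> supp \<mu>"
    by (elim bexE conjE)
  have "d_r r (discr p x) \<mu> \<le> d_r r (discr p y) \<mu>" if y: "y \<in> Xi n" for y
    using d_zero[OF False x(1)] d_nonneg[of "discr p y" \<mu>] by simp
  then show ?thesis using x by blast
qed

end

theorem proposition5:
  fixes r :: real and \<mu> :: "real measure" and n :: nat and p :: "real list"
  assumes "r \<ge> 1"
    and "prob_real_r r \<mu>"
    and "p \<in> Pi_simplex n"
    and "r = 1 \<or> connected (supp \<mu>)"
  shows "\<exists>x \<in> Xi n. (\<forall>y \<in> Xi n. d_r r (discr p x) \<mu> \<le> d_r r (discr p y) \<mu>)
            \<and> supp (discr p x) \<subseteq> supp \<mu>"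
proof -
  have rd: "real_distribution \<mu>" using assms(2) by (intro prob_real_rd) (simp add: prob_real_r_def)
  interpret P5 r \<mu> n p by (rule P5.intro[OF assms(1) rd assms(3)])
  show ?thesis by (rule main[OF assms(4)])
qed


end
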